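(* Let $G$ be a compact abelian group with discrete dual group $\Gamma$ and $N \in \mathbb{N}$. Every $N$-PR set $E \subset \Gamma$ is weak $\varepsilon$-Kronecker for $\varepsilon = |1 - e^{\pi i/N}|$.
   Context: $\mathbb{T}$ is the unit circle and $\mathbb{Z}_N$ is identified with the $N$-th roots of unity in $\mathbb{T}$. A subset $E \subset \Gamma$ is $N$-PR if for every function $\varphi: E \to \mathbb{Z}_N$ there exists $x \in G$ with $\varphi(\gamma) = \gamma(x)$ for all $\gamma \in E$. For $\varepsilon > 0$, $E$ is weak $\varepsilon$-Kronecker if for every function $\varphi: E \to \mathbb{T}$ there exists $x \in G$ with $|\varphi(\gamma) - \gamma(x)| \le \varepsilon$ for all $\gamma \in E$. *)

theory Defs
  imports "HOL-Analysis.Analysis"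
begin

text \<open>A compact abelian group G is modelled as a type 'g of class
  topological_ab_group_add (written additively) which is Hausdorff and compact.\<close>

definition character :: "('g::topological_ab_group_add \<Rightarrow> complex) \<Rightarrow> bool" where
  "character \<gamma> \<longleftrightarrow> continuous_on UNIV \<gamma> \<and> (\<forall>x. cmod (\<gamma> x) = 1)
     \<and> (\<forall>x y. \<gamma> (x + y) = \<gamma> x * \<gamma> y)"

definition dual_group :: "('g::topological_ab_group_add \<Rightarrow> complex) set" where
  "dual_group = {\<gamma>. character \<gamma>}"

text \<open>The unit circle T, and Z_N identified with the N-th roots of unity.\<close>
definition circle :: "complex set" where
  "circle = {z. cmod z = 1}"

definition roots_of_unity :: "nat \<Rightarrow> complex set" where
  "roots_of_unity N = {z. z ^ N = 1}"

definition N_PR :: "nat \<Rightarrow> ('g::topological_ab_group_add \<Rightarrow> complex) set \<Rightarrow> bool" where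
  "N_PR N E \<longleftrightarrow> (\<forall>\<phi> \<in> E \<rightarrow> roots_of_unity N. \<exists>x. \<forall>\<gamma>\<in>E. \<phi> \<gamma> = \<gamma> x)"

definition weak_Kronecker :: "real \<Rightarrow> ('g::topological_ab_group_add \<Rightarrow> complex) set \<Rightarrow> bool" where
  "weak_Kronecker \<epsilon> E \<longleftrightarrow> (\<forall>\<phi> \<in> E \<rightarrow> circle. \<exists>x. \<forall>\<gamma>\<in>E. cmod (\<phi> \<gamma> - \<gamma> x) \<le> \<epsilon>)"

end

theory Submission
  imports Defs
begin

lemma cmod_cis_minus_1: "cmod (cis s - 1) = sqrt (2 - 2 * cos s)"
proof -
  have "cmod (cis s - 1) = sqrt ((cos s - 1)^2 + (sin s)^2)"
    by (simp add: cmod_def)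
  also have "(cos s - 1)^2 + (sin s)^2 = 2 - 2 * cos s"
    using sin_cos_squared_add[of s] by (simp add: power2_eq_square algebra_simps)
  finally show ?thesis .
qed

lemma near_root:
  fixes z :: complex and N :: nat
  assumes "cmod z = 1" "N \<ge> 1"
  shows "\<exists>w. w ^ N = 1 \<and> cmod (z - w) \<le> cmod (1 - exp (pi * \<i> / of_nat N))"
proof -
  define t where "t = Arg z"
  have z: "z = cis t" using rcis_cmod_Arg[of z] assms(1) by (simp add: t_def rcis_def)
  define k :: int where "k = round (t * N / (2*pi))"
  define s where "s = t - 2*pi*k/N"
  have Npos: "real N > 0" using assms by simp
  have r: "\<bar>t * N / (2*pi) - k\<bar> \<le> 1/2" unfolding k_def using of_int_round_abs_le[of "t * N / (2*pi)"] by (simp add: abs_minus_commute)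
  have "s = (t * N / (2*pi) - k) * (2*pi/N)" using Npos unfolding s_def by (simp add: field_simps)
  hence "\<bar>s\<bar> = \<bar>t * N / (2*pi) - k\<bar> * (2*pi/N)" by (simp add: abs_mult)
  also have "\<dots> \<le> 1/2 * (2*pi/N)" using r Npos by (intro mult_right_mono) auto
  finally have sb: "\<bar>s\<bar> \<le> pi / N" by simp
  have piN: "pi / N \<le> pi" using assms by (simp add: divide_le_eq)
  have cosle: "cos (pi/N) \<le> cos s"
  proof -
    have "cos (pi/N) \<le> cos \<bar>s\<bar>"
      using sb piN by (intro cos_monotone_0_pi_le) auto
    thus ?thesis by (cases "s \<ge> 0") auto
  qed
  define w where "w = cis (2*pi*k/N)"
  have "w ^ N = cis (real N * (2*pi*k/N))" unfolding w_def by (rule Complex.DeMoivre)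
  also have "real N * (2*pi*k/N) = 2*pi*real_of_int k" using Npos by simp
  also have "cis (2*pi*real_of_int k) = 1" by simp
  finally have wN: "w ^ N = 1" .
  have "z = w * cis s" unfolding z w_def s_def by (simp add: cis_mult)
  hence "z - w = w * (cis s - 1)" by (simp add: algebra_simps)
  hence "cmod (z - w) = cmod (cis s - 1)" by (simp add: norm_mult w_def)
  also have "\<dots> = sqrt (2 - 2 * cos s)" by (rule cmod_cis_minus_1)
  also have "\<dots> \<le> sqrt (2 - 2 * cos (pi/N))" using cosle by simp
  also have "\<dots> = cmod (cis (pi/N) - 1)" by (rule cmod_cis_minus_1[symmetric])
  also have "\<dots> = cmod (1 - exp (pi * \<i> / of_nat N))"
    by (simp add: cis_conv_exp norm_minus_commute mult.commute)
  finally show ?thesis using wN by blast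
qed

theorem proposition2p7:
  fixes E :: "('g::{topological_ab_group_add, t2_space} \<Rightarrow> complex) set"
    and N :: nat
  assumes "compact (UNIV :: 'g set)"
    and "N \<ge> 1"
    and "E \<subseteq> dual_group"
    and "N_PR N E"
  shows "weak_Kronecker (cmod (1 - exp (pi * \<i> / of_nat N))) E"
  unfolding weak_Kronecker_def
proof
  fix \<phi> assume phi: "\<phi> \<in> E \<rightarrow> circle"
  define \<psi> where "\<psi> = (\<lambda>\<gamma>. SOME w. w ^ N = 1 \<and> cmod (\<phi> \<gamma> - w) \<le> cmod (1 - exp (pi * \<i> / of_nat N)))"
  have psi: "\<psi> \<gamma> ^ N = 1 \<and> cmod (\<phi> \<gamma> - \<psi> \<gamma>) \<le> cmod (1 - exp (pi * \<i> / of_nat N))"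
    if "\<gamma> \<in> E" for \<gamma>
  proof -
    have "cmod (\<phi> \<gamma>) = 1" using phi that by (auto simp: circle_def)
    from near_root[OF this assms(2)] show ?thesis
      unfolding \<psi>_def by (rule someI_ex)
  qed
  hence "\<psi> \<in> E \<rightarrow> roots_of_unity N" by (auto simp: roots_of_unity_def)
  then obtain x where x: "\<forall>\<gamma>\<in>E. \<psi> \<gamma> = \<gamma> x" using assms(4) unfolding N_PR_def by blast
  show "\<exists>x. \<forall>\<gamma>\<in>E. cmod (\<phi> \<gamma> - \<gamma> x) \<le> cmod (1 - exp (pi * \<i> / of_nat N))"
    using psi x by metis
qed

end
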